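(* Let $\Sigma$ be an alphabet, $L$ a finite language and $L'$ a regular language over $\Sigma$. Then (a) $\mathrm{rpn}(L) \geq \mathrm{rpn}(\overline{L})$ and $\mathrm{rpn}(L') \geq \mathrm{rpn}(\underline{L'})$; (b) for every weighting $\mu : \Sigma \to \mathbb{R}_{\geq 0}$, $\mathrm{rpn}(L)\geq \mathrm{rpn}(\overline{L}^{\mu})$ and $\mathrm{rpn}(L')\geq \mathrm{rpn}(\underline{L'}_{\mu})$.
   Context: Regular expressions are built from $\epsilon$ and letters by union, concatenation and star (no $\emptyset$); $\mathrm{rpn}(L)$ is the minimum number of syntax-tree nodes of an expression describing $L$. The lower envelope $\underline{L'}$ is the set of words of minimal length in $L'$; for finite $L$ the higher envelope $\overline{L}$ is the set of words of maximal length in $L$. For a weighting $\mu$, the weight of $w=w_1\cdots w_n$ is $\mu(w)=\sum_i\mu(w_i)$; $\underline{L'}_{\mu}$ is the set of words of minimal weight in $L'$ and, for finite $L$, $\overline{L}^{\mu}$ is the set of words of maximal weight in $L$. Languages are assumed nonempty and different from $\{\epsilon\}$. *)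

theory Defs
  imports Main "HOL-Library.Extended_Nat" Complex_Main
begin

datatype 'a rexp = Eps | Sym 'a | Plus "'a rexp" "'a rexp" | Times "'a rexp" "'a rexp" | Star "'a rexp"

definition conc :: "'a list set \<Rightarrow> 'a list set \<Rightarrow> 'a list set" where
  "conc A B = {u @ v | u v. u \<in> A \<and> v \<in> B}"

inductive_set star_lang :: "'a list set \<Rightarrow> 'a list set" for A where
  star_nil: "[] \<in> star_lang A"
| star_app: "u \<in> A \<Longrightarrow> v \<in> star_lang A \<Longrightarrow> u @ v \<in> star_lang A"

fun lang :: "'a rexp \<Rightarrow> 'a list set" where
  "lang Eps = {[]}"
| "lang (Sym a) = {[a]}"
| "lang (Plus r s) = lang r \<union> lang s"
| "lang (Times r s) = conc (lang r) (lang s)"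
| "lang (Star r) = star_lang (lang r)"

fun nodes :: "'a rexp \<Rightarrow> nat" where
  "nodes Eps = 1"
| "nodes (Sym a) = 1"
| "nodes (Plus r s) = 1 + nodes r + nodes s"
| "nodes (Times r s) = 1 + nodes r + nodes s"
| "nodes (Star r) = 1 + nodes r"

fun letters :: "'a rexp \<Rightarrow> 'a set" where
  "letters Eps = {}"
| "letters (Sym a) = {a}"
| "letters (Plus r s) = letters r \<union> letters s"
| "letters (Times r s) = letters r \<union> letters s"
| "letters (Star r) = letters r"

definition regular :: "'a set \<Rightarrow> 'a list set \<Rightarrow> bool" where
  "regular \<Sigma> L \<longleftrightarrow> (\<exists>r. letters r \<subseteq> \<Sigma> \<and> lang r = L)"

(* reverse polish notation length: minimal number of syntax-tree nodes of an
   expression over \<Sigma> describing L *)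
definition rpn :: "'a set \<Rightarrow> 'a list set \<Rightarrow> nat" where
  "rpn \<Sigma> L = (LEAST n. \<exists>r. letters r \<subseteq> \<Sigma> \<and> lang r = L \<and> nodes r = n)"

definition weight :: "('a \<Rightarrow> real) \<Rightarrow> 'a list \<Rightarrow> real" where
  "weight \<mu> w = (\<Sum>i<length w. \<mu> (w ! i))"

definition lower_env :: "'a list set \<Rightarrow> 'a list set" where
  "lower_env L = {w \<in> L. \<forall>v \<in> L. length w \<le> length v}"

definition higher_env :: "'a list set \<Rightarrow> 'a list set" where
  "higher_env L = {w \<in> L. \<forall>v \<in> L. length v \<le> length w}"

definition lower_env_w :: "('a \<Rightarrow> real) \<Rightarrow> 'a list set \<Rightarrow> 'a list set" where
  "lower_env_w \<mu> L = {w \<in> L. \<forall>v \<in> L. weight \<mu> w \<le> weight \<mu> v}"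

definition higher_env_w :: "('a \<Rightarrow> real) \<Rightarrow> 'a list set \<Rightarrow> 'a list set" where
  "higher_env_w \<mu> L = {w \<in> L. \<forall>v \<in> L. weight \<mu> v \<le> weight \<mu> w}"

end

theory Submission
  imports Defs
begin

lemma weight_sl: "weight \<mu> w = sum_list (map \<mu> w)"
  unfolding weight_def by (simp add: sum_list_sum_nth atLeast0LessThan)

lemma weight_simps[simp]: "weight \<mu> [] = 0" "weight \<mu> (u @ v) = weight \<mu> u + weight \<mu> v"
  "weight \<mu> (a # v) = \<mu> a + weight \<mu> v"
  by (simp_all add: weight_sl)

lemma weight_nonneg: "set w \<subseteq> S \<Longrightarrow> \<forall>a\<in>S. \<mu> a \<ge> 0 \<Longrightarrow> weight \<mu> w \<ge> 0"
  by (induction w) auto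

lemma lang_ne: "lang r \<noteq> {}"
proof (induction r)
  case (Times r s) then show ?case by (auto simp: conc_def)
next
  case (Star r) then show ?case using star_nil by auto
qed auto

lemma star_sub: "w \<in> star_lang A \<Longrightarrow> A \<subseteq> lists S \<Longrightarrow> set w \<subseteq> S"
  by (induction rule: star_lang.induct) auto

lemma lang_letters: "w \<in> lang r \<Longrightarrow> set w \<subseteq> letters r"
proof (induction r arbitrary: w)
  case (Times r s) then show ?case by (fastforce simp: conc_def)
next
  case (Star r)
  have "lang r \<subseteq> lists (letters r)" using Star.IH by auto
  then show ?case using Star.prems star_sub[of w "lang r" "letters r"] by auto
qed auto

lemma env_char: "m \<in> A \<Longrightarrow> \<forall>v\<in>A. weight \<mu> m \<le> weight \<mu> v \<Longrightarrow>
  lower_env_w \<mu> A = {w\<in>A. weight \<mu> w = weight \<mu> m}"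
  unfolding lower_env_w_def by (auto intro: order.antisym order.trans)

lemma env_single: "lower_env_w \<mu> {x} = {x}"
proof -
  have "weight \<mu> x \<le> weight \<mu> x" by (rule order_refl)
  then show ?thesis unfolding lower_env_w_def by blast
qed

lemma plus_env:
  assumes "lower_env_w \<mu> A \<noteq> {}" "lower_env_w \<mu> B \<noteq> {}"
  shows "\<exists>x\<in>{lower_env_w \<mu> A, lower_env_w \<mu> B, lower_env_w \<mu> A \<union> lower_env_w \<mu> B}.
           lower_env_w \<mu> (A \<union> B) = x"
proof -
  obtain a where a: "a \<in> A" "\<forall>v\<in>A. weight \<mu> a \<le> weight \<mu> v" using assms(1) unfolding lower_env_w_def by auto
  obtain b where b: "b \<in> B" "\<forall>v\<in>B. weight \<mu> b \<le> weight \<mu> v" using assms(2) unfolding lower_env_w_def by auto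
  note ea = env_char[OF a] and eb = env_char[OF b]
  have "weight \<mu> a < weight \<mu> b \<or> weight \<mu> b < weight \<mu> a \<or> weight \<mu> a = weight \<mu> b" by auto
  then show ?thesis
  proof (elim disjE)
    assume h: "weight \<mu> a < weight \<mu> b"
    have "\<forall>v\<in>A \<union> B. weight \<mu> a \<le> weight \<mu> v" using a b h by force
    from env_char[OF _ this] a(1) have "lower_env_w \<mu> (A \<union> B) = {w\<in>A \<union> B. weight \<mu> w = weight \<mu> a}" by blast
    also have "\<dots> = lower_env_w \<mu> A" unfolding ea using b h by force
    finally show ?thesis by auto
  next
    assume h: "weight \<mu> b < weight \<mu> a"
    have "\<forall>v\<in>A \<union> B. weight \<mu> b \<le> weight \<mu> v" using a b h by force
    from env_char[OF _ this] b(1) have "lower_env_w \<mu> (A \<union> B) = {w\<in>A \<union> B. weight \<mu> w = weight \<mu> b}" by blast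
    also have "\<dots> = lower_env_w \<mu> B" unfolding eb using a h by force
    finally show ?thesis by auto
  next
    assume h: "weight \<mu> a = weight \<mu> b"
    have "\<forall>v\<in>A \<union> B. weight \<mu> a \<le> weight \<mu> v" using a b h by force
    from env_char[OF _ this] a(1) have "lower_env_w \<mu> (A \<union> B) = {w\<in>A \<union> B. weight \<mu> w = weight \<mu> a}" by blast
    also have "\<dots> = lower_env_w \<mu> A \<union> lower_env_w \<mu> B" unfolding ea eb using h by auto
    finally show ?thesis by auto
  qed
qed

lemma times_env:
  assumes "lower_env_w \<mu> A \<noteq> {}" "lower_env_w \<mu> B \<noteq> {}"
  shows "lower_env_w \<mu> (conc A B) = conc (lower_env_w \<mu> A) (lower_env_w \<mu> B)"
proof -
  obtain a where a: "a \<in> A" "\<forall>v\<in>A. weight \<mu> a \<le> weight \<mu> v" using assms(1) unfolding lower_env_w_def by auto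
  obtain b where b: "b \<in> B" "\<forall>v\<in>B. weight \<mu> b \<le> weight \<mu> v" using assms(2) unfolding lower_env_w_def by auto
  have ab: "a @ b \<in> conc A B" using a b by (auto simp: conc_def)
  show ?thesis
  proof
    show "lower_env_w \<mu> (conc A B) \<subseteq> conc (lower_env_w \<mu> A) (lower_env_w \<mu> B)"
    proof
      fix w assume w: "w \<in> lower_env_w \<mu> (conc A B)"
      then obtain u v where uv: "w = u @ v" "u \<in> A" "v \<in> B" unfolding lower_env_w_def conc_def by auto
      have "weight \<mu> w \<le> weight \<mu> a + weight \<mu> b" using w ab unfolding lower_env_w_def by auto
      then have "weight \<mu> u = weight \<mu> a" "weight \<mu> v = weight \<mu> b" using uv a b by (auto, fastforce+)
      then have "u \<in> lower_env_w \<mu> A" "v \<in> lower_env_w \<mu> B" using uv a b unfolding lower_env_w_def by auto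
      then show "w \<in> conc (lower_env_w \<mu> A) (lower_env_w \<mu> B)" using uv by (auto simp: conc_def)
    qed
  next
    show "conc (lower_env_w \<mu> A) (lower_env_w \<mu> B) \<subseteq> lower_env_w \<mu> (conc A B)"
    proof
      fix w assume "w \<in> conc (lower_env_w \<mu> A) (lower_env_w \<mu> B)"
      then obtain u v where uv: "w = u @ v" "u \<in> lower_env_w \<mu> A" "v \<in> lower_env_w \<mu> B" by (auto simp: conc_def)
      show "w \<in> lower_env_w \<mu> (conc A B)"
        unfolding lower_env_w_def conc_def
      proof (safe)
        show "\<exists>u' v'. w = u' @ v' \<and> u' \<in> A \<and> v' \<in> B" using uv unfolding lower_env_w_def by auto
      next
        fix x y assume "x \<in> A" "y \<in> B"
        then show "weight \<mu> w \<le> weight \<mu> (x @ y)" using uv unfolding lower_env_w_def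
          by (auto intro: add_mono)
      qed
    qed
  qed
qed

lemma star_single: "w \<in> star_lang A \<Longrightarrow> A \<subseteq> {[]} \<Longrightarrow> w = []"
  by (induction rule: star_lang.induct) auto

lemma star_zero:
  assumes "A \<subseteq> lists S" "\<forall>a\<in>S. \<mu> a \<ge> 0"
  shows "{w \<in> star_lang A. weight \<mu> w = 0} = star_lang {u \<in> A. weight \<mu> u = 0}"
proof
  show "{w \<in> star_lang A. weight \<mu> w = 0} \<subseteq> star_lang {u \<in> A. weight \<mu> u = 0}"
  proof (safe)
    fix w assume "w \<in> star_lang A" "weight \<mu> w = 0"
    then show "w \<in> star_lang {u \<in> A. weight \<mu> u = 0}"
    proof (induction rule: star_lang.induct)
      case star_nil show ?case by (rule star_lang.star_nil)
    next
      case (star_app u v)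
      have "weight \<mu> u \<ge> 0" using star_app(1) assms weight_nonneg[of u S \<mu>] by auto
      moreover have "weight \<mu> v \<ge> 0" using star_app(2) assms star_sub weight_nonneg by metis
      ultimately have "weight \<mu> u = 0" "weight \<mu> v = 0" using star_app(4) by auto
      then show ?case using star_app by (auto intro: star_lang.star_app)
    qed
  qed
next
  show "star_lang {u \<in> A. weight \<mu> u = 0} \<subseteq> {w \<in> star_lang A. weight \<mu> w = 0}"
  proof
    fix w assume "w \<in> star_lang {u \<in> A. weight \<mu> u = 0}"
    then show "w \<in> {w \<in> star_lang A. weight \<mu> w = 0}"
      by (induction rule: star_lang.induct) (auto intro: star_lang.intros)
  qed
qed

lemma conc_fin1: "finite (conc A B) \<Longrightarrow> B \<noteq> {} \<Longrightarrow> finite A"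
proof -
  assume f: "finite (conc A B)" and "B \<noteq> {}"
  then obtain b where b: "b \<in> B" by auto
  have "(\<lambda>u. u @ b) ` A \<subseteq> conc A B" using b by (auto simp: conc_def)
  then have "finite ((\<lambda>u. u @ b) ` A)" using f finite_subset by blast
  moreover have "inj_on (\<lambda>u. u @ b) A" by (auto simp: inj_on_def)
  ultimately show "finite A" using finite_imageD by blast
qed

lemma conc_fin2: "finite (conc A B) \<Longrightarrow> A \<noteq> {} \<Longrightarrow> finite B"
proof -
  assume f: "finite (conc A B)" and "A \<noteq> {}"
  then obtain a where a: "a \<in> A" by auto
  have "(\<lambda>u. a @ u) ` B \<subseteq> conc A B" using a by (auto simp: conc_def)
  then have "finite ((\<lambda>u. a @ u) ` B)" using f finite_subset by blast
  moreover have "inj_on (\<lambda>u. a @ u) B" by (auto simp: inj_on_def)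
  ultimately show "finite B" using finite_imageD by blast
qed

lemma pow_in_star: "u \<in> A \<Longrightarrow> concat (replicate n u) \<in> star_lang A"
  by (induction n) (auto intro: star_lang.intros)

lemma star_fin: "finite (star_lang A) \<Longrightarrow> A \<subseteq> {[]}"
proof (rule ccontr)
  assume f: "finite (star_lang A)" and "\<not> A \<subseteq> {[]}"
  then obtain u where u: "u \<in> A" "u \<noteq> []" by auto
  have "range (\<lambda>n. concat (replicate n u)) \<subseteq> star_lang A" using pow_in_star u by auto
  moreover have "inj (\<lambda>n. concat (replicate n u))"
  proof (rule injI)
    fix m n assume "concat (replicate m u) = concat (replicate n u)"
    then have "length (concat (replicate m u)) = length (concat (replicate n u))" by simp
    then have "m * length u = n * length u" by (simp add: length_concat sum_list_replicate)
    then show "m = n" using u by simp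
  qed
  ultimately show False using f
    by (meson finite_imageD finite_subset infinite_UNIV_nat)
qed

lemma main:
  "finite (lang r) \<or> (\<forall>a\<in>letters r. \<mu> a \<ge> 0) \<Longrightarrow>
   \<exists>r'. nodes r' \<le> nodes r \<and> letters r' \<subseteq> letters r \<and> lang r' = lower_env_w \<mu> (lang r)"
proof (induction r)
  case Eps
  have "lower_env_w \<mu> {[]} = {[]}" by (rule env_single)
  then show ?case by (intro exI[of _ Eps]) simp
next
  case (Sym x)
  have "lower_env_w \<mu> {[x]} = {[x]}" by (rule env_single)
  then show ?case by (intro exI[of _ "Sym x"]) simp
next
  case (Plus r s)
  from Plus.prems have "finite (lang r) \<or> (\<forall>a\<in>letters r. \<mu> a \<ge> 0)" by auto
  then obtain r' where r': "nodes r' \<le> nodes r" "letters r' \<subseteq> letters r" "lang r' = lower_env_w \<mu> (lang r)"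
    using Plus.IH(1) by blast
  from Plus.prems have "finite (lang s) \<or> (\<forall>a\<in>letters s. \<mu> a \<ge> 0)" by auto
  then obtain s' where s': "nodes s' \<le> nodes s" "letters s' \<subseteq> letters s" "lang s' = lower_env_w \<mu> (lang s)"
    using Plus.IH(2) by blast
  have n1: "lower_env_w \<mu> (lang r) \<noteq> {}" using r'(3) lang_ne[of r'] by simp
  have n2: "lower_env_w \<mu> (lang s) \<noteq> {}" using s'(3) lang_ne[of s'] by simp
  from plus_env[OF n1 n2] have
    "lower_env_w \<mu> (lang r \<union> lang s) = lang r' \<or> lower_env_w \<mu> (lang r \<union> lang s) = lang s' \<or>
     lower_env_w \<mu> (lang r \<union> lang s) = lang (Plus r' s')" using r'(3) s'(3) by simp
  then show ?case
  proof (elim disjE)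
    assume "lower_env_w \<mu> (lang r \<union> lang s) = lang r'"
    then show ?thesis using r' by (intro exI[of _ r']) auto
  next
    assume "lower_env_w \<mu> (lang r \<union> lang s) = lang s'"
    then show ?thesis using s' by (intro exI[of _ s']) auto
  next
    assume "lower_env_w \<mu> (lang r \<union> lang s) = lang (Plus r' s')"
    then show ?thesis using r' s' by (intro exI[of _ "Plus r' s'"]) auto
  qed
next
  case (Times r s)
  have f: "finite (conc (lang r) (lang s)) \<or> (\<forall>a\<in>letters r \<union> letters s. \<mu> a \<ge> 0)"
    using Times.prems by simp
  have "finite (lang r) \<or> (\<forall>a\<in>letters r. \<mu> a \<ge> 0)"
    using f conc_fin1[of "lang r" "lang s"] lang_ne[of s] by blast
  then obtain r' where r': "nodes r' \<le> nodes r" "letters r' \<subseteq> letters r" "lang r' = lower_env_w \<mu> (lang r)"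
    using Times.IH(1) by blast
  have "finite (lang s) \<or> (\<forall>a\<in>letters s. \<mu> a \<ge> 0)"
    using f conc_fin2[of "lang r" "lang s"] lang_ne[of r] by blast
  then obtain s' where s': "nodes s' \<le> nodes s" "letters s' \<subseteq> letters s" "lang s' = lower_env_w \<mu> (lang s)"
    using Times.IH(2) by blast
  have n1: "lower_env_w \<mu> (lang r) \<noteq> {}" using r'(3) lang_ne[of r'] by simp
  have n2: "lower_env_w \<mu> (lang s) \<noteq> {}" using s'(3) lang_ne[of s'] by simp
  have "lang (Times r' s') = lower_env_w \<mu> (lang (Times r s))"
    using times_env[OF n1 n2] r'(3) s'(3) by simp
  then show ?case using r'(1,2) s'(1,2)
    by (intro exI[of _ "Times r' s'"]) auto
next
  case (Star r)
  show ?case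
  proof (cases "finite (lang (Star r))")
    case True
    then have "lang r \<subseteq> {[]}" using star_fin by auto
    then have "lang (Star r) = {[]}" using star_single[of _ "lang r"] star_nil[of "lang r"] by auto
    then have "lang Eps = lower_env_w \<mu> (lang (Star r))" using env_single[of \<mu> "[]"] by simp
    then show ?thesis by (intro exI[of _ Eps]) simp
  next
    case False
    then have nn: "\<forall>a\<in>letters r. \<mu> a \<ge> 0" using Star.prems by auto
    then obtain r' where r': "nodes r' \<le> nodes r" "letters r' \<subseteq> letters r" "lang r' = lower_env_w \<mu> (lang r)"
      using Star.IH by auto
    have sub: "lang r \<subseteq> lists (letters r)" using lang_letters by auto
    have ge: "\<forall>w\<in>lang (Star r). weight \<mu> w \<ge> 0"
    proof
      fix w assume "w \<in> lang (Star r)"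
      then have "set w \<subseteq> letters r" using star_sub[of w "lang r" "letters r"] sub by simp
      then show "weight \<mu> w \<ge> 0" using weight_nonneg[of w "letters r" \<mu>] nn by blast
    qed
    have "[] \<in> lang (Star r)" by (simp add: star_nil)
    from env_char[OF this] ge
    have "lower_env_w \<mu> (lang (Star r)) = {w \<in> lang (Star r). weight \<mu> w = 0}" by simp
    also have "\<dots> = star_lang {u \<in> lang r. weight \<mu> u = 0}" using star_zero[OF sub nn] by simp
    finally have e: "lower_env_w \<mu> (lang (Star r)) = star_lang {u \<in> lang r. weight \<mu> u = 0}" .
    have ger: "\<forall>w\<in>lang r. weight \<mu> w \<ge> 0"
    proof
      fix w assume "w \<in> lang r"
      then have "set w \<subseteq> letters r" using sub by auto
      then show "weight \<mu> w \<ge> 0" using weight_nonneg[of w "letters r" \<mu>] nn by blast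
    qed
    obtain m where m: "m \<in> lower_env_w \<mu> (lang r)" using r' lang_ne by blast
    then have m1: "m \<in> lang r" and m2: "\<forall>v\<in>lang r. weight \<mu> m \<le> weight \<mu> v"
      unfolding lower_env_w_def by auto
    note em = env_char[OF m1 m2]
    show ?thesis
    proof (cases "weight \<mu> m = 0")
      case True
      then have "{u \<in> lang r. weight \<mu> u = 0} = lower_env_w \<mu> (lang r)"
        unfolding em by simp
      then show ?thesis using e r' by (intro exI[of _ "Star r'"]) auto
    next
      case False
      then have "weight \<mu> m > 0" using ger m1 by force
      then have z: "{u \<in> lang r. weight \<mu> u = 0} = {}"
        using m2 by force
      have e2: "lower_env_w \<mu> (lang (Star r)) = star_lang {}" using e unfolding z .
      have "star_lang {} = {[]}" using star_single[of _ "{}"] star_nil by blast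
      then have "lower_env_w \<mu> (lang (Star r)) = {[]}" using e2 by simp
      then show ?thesis by (intro exI[of _ Eps]) simp
    qed
  qed
qed

fun wexp :: "'a list \<Rightarrow> 'a rexp" where
  "wexp [] = Eps" | "wexp (a # w) = Times (Sym a) (wexp w)"

lemma wexp: "lang (wexp w) = {w}" "letters (wexp w) = set w"
  by (induction w) (auto simp: conc_def)

lemma fin_reg: "finite L \<Longrightarrow> L \<noteq> {} \<Longrightarrow> L \<subseteq> lists S \<Longrightarrow> \<exists>r. letters r \<subseteq> S \<and> lang r = L"
proof (induction L rule: finite_ne_induct)
  case (singleton x) then show ?case by (intro exI[of _ "wexp x"]) (auto simp: wexp)
next
  case (insert x F)
  then obtain r where "letters r \<subseteq> S" "lang r = F" by auto
  then show ?case using insert wexp by (intro exI[of _ "Plus (wexp x) r"]) (auto simp: wexp)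
qed

lemma rpn_ex: "letters r \<subseteq> \<Sigma> \<Longrightarrow> lang r = L \<Longrightarrow> \<exists>r0. letters r0 \<subseteq> \<Sigma> \<and> lang r0 = L \<and> nodes r0 = rpn \<Sigma> L"
  unfolding rpn_def by (rule LeastI_ex) blast

lemma rpn_le: "letters r \<subseteq> \<Sigma> \<Longrightarrow> lang r = L \<Longrightarrow> rpn \<Sigma> L \<le> nodes r"
  unfolding rpn_def by (rule Least_le) blast

lemma env_gen:
  assumes "letters r \<subseteq> \<Sigma>" "lang r = L" "finite L \<or> (\<forall>a\<in>\<Sigma>. \<mu> a \<ge> 0)"
  shows "rpn \<Sigma> (lower_env_w \<mu> L) \<le> rpn \<Sigma> L"
proof -
  obtain r0 where r0: "letters r0 \<subseteq> \<Sigma>" "lang r0 = L" "nodes r0 = rpn \<Sigma> L" using rpn_ex assms by metis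
  have "finite (lang r0) \<or> (\<forall>a\<in>letters r0. \<mu> a \<ge> 0)" using assms r0 by auto
  from main[OF this] obtain r' where "nodes r' \<le> nodes r0" "letters r' \<subseteq> letters r0" "lang r' = lower_env_w \<mu> (lang r0)"
    by blast
  then show ?thesis using r0 rpn_le[of r' \<Sigma>] by fastforce
qed

lemma weight_neg: "weight (\<lambda>a. - \<mu> a) w = - weight \<mu> w"
  by (induction w) auto

lemma weight_one: "weight (\<lambda>a. 1) w = length w"
  by (induction w) auto

lemma higher_eq: "higher_env_w \<mu> L = lower_env_w (\<lambda>a. - \<mu> a) L"
  unfolding higher_env_w_def lower_env_w_def weight_neg by auto

lemma higher_eq1: "higher_env L = higher_env_w (\<lambda>a. 1) L"
  unfolding higher_env_w_def higher_env_def weight_one by auto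

lemma lower_eq1: "lower_env L = lower_env_w (\<lambda>a. 1) L"
  unfolding lower_env_w_def lower_env_def weight_one by auto

theorem lemma8p1:
  fixes \<Sigma> :: "'a set" and L L' :: "'a list set"
  assumes "finite \<Sigma>" "\<Sigma> \<noteq> {}"
    and "finite L" "L \<subseteq> lists \<Sigma>" "L \<noteq> {}" "L \<noteq> {[]}"
    and "regular \<Sigma> L'" "L' \<noteq> {}" "L' \<noteq> {[]}"
  shows "rpn \<Sigma> L \<ge> rpn \<Sigma> (higher_env L) \<and> rpn \<Sigma> L' \<ge> rpn \<Sigma> (lower_env L')
    \<and> (\<forall>\<mu>::'a \<Rightarrow> real. (\<forall>a\<in>\<Sigma>. \<mu> a \<ge> 0) \<longrightarrow>
         rpn \<Sigma> L \<ge> rpn \<Sigma> (higher_env_w \<mu> L) \<and> rpn \<Sigma> L' \<ge> rpn \<Sigma> (lower_env_w \<mu> L'))"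
proof -
  obtain r where r: "letters r \<subseteq> \<Sigma>" "lang r = L" using fin_reg assms by metis
  obtain r' where r': "letters r' \<subseteq> \<Sigma>" "lang r' = L'" using assms(7) unfolding regular_def by auto
  have H: "rpn \<Sigma> (higher_env_w \<mu> L) \<le> rpn \<Sigma> L" for \<mu>
    unfolding higher_eq using env_gen[OF r] assms(3) by blast
  have Lo: "(\<forall>a\<in>\<Sigma>. \<mu> a \<ge> 0) \<Longrightarrow> rpn \<Sigma> (lower_env_w \<mu> L') \<le> rpn \<Sigma> L'" for \<mu>
    using env_gen[OF r'] by blast
  show ?thesis unfolding higher_eq1 lower_eq1 using H Lo[of "\<lambda>a. 1"] Lo by auto
qed

end
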